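(* Let Assumptions (G) and (S) hold and let the local clocks be synchronized from $t_0$ on. Let $Q\in\mathbb{R}^{n\times n}$ be symmetric positive definite, and let $P\in\mathbb{R}^{n\times n}$ be a symmetric positive definite solution of the algebraic Riccati equation $$PA+A^TP-PBB^TP+Q=0.$$ Set $K=-B^TP$, and choose constants $c_1\ge \frac{1}{2\lambda_2}$ and $c_2\ge f_0(N-1)$. Let $s_i$, $i=1,\dots,N$, be a solution on $[t_0,\infty)$ of the static algorithm (SA) with $s_i(t_0)=0$ for all $i$, and set $x_i=s_i+r_i$. Then $$\lim_{t\to\infty}\Big\|x_i(t)-\frac1N\sum_{k=1}^N r_k(t)\Big\|=0\qquad\text{for all } i=1,\dots,N.$$
   Context: Graph: $\mathcal{G}$ is a simple graph on the vertex set $\{1,\dots,N\}$. Assumption (G): $\mathcal{G}$ is undirected and connected. $\mathcal{N}_i$ denotes the neighbor set of node $i$ and $|\mathcal{N}_i|$ its cardinality. $L$ is the graph Laplacian (degree matrix minus adjacency matrix), and $\lambda_2$ is its smallest nonzero eigenvalue. Reference signals: $A\in\mathbb{R}^{n\times n}$ and $B\in\mathbb{R}^{n\times p}$ are constant matrices. Assumption (S): the pair $(A,B)$ is stabilizable. For $i=1,\dots,N$, the signal $r_i:[t_0,\infty)\to\mathbb{R}^n$ satisfies $\dot r_i(t)=Ar_i(t)+Bf_i(t)$, where $f_i:[t_0,\infty)\to\mathbb{R}^p$ is continuous with $\|f_i(t)\|\le f_0$ for all $t$, and $f_0>0$ is a constant. Local clocks: each agent $i$ has a local time $t_i(t)$.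 "The local clocks are synchronized from $t_0$ on" means that there is a constant $\eta$ such that $t_i(t)=t+\eta$ for all $i$ and all $t\ge t_0$. Boundary-layer function: for fixed constants $\varepsilon>0$ and $\varphi>0$, and for $\omega\in\mathbb{R}^p$, set $h_i(\omega,t_i)=\dfrac{\omega}{\|\omega\|+\varepsilon e^{-\varphi t_i}}$. Static algorithm (SA): for $i=1,\dots,N$ and $t\ge t_0$, $$\dot s_i=As_i+Bu_i,\qquad u_i=c_1\sum_{j\in\mathcal{N}_i}K(x_i-x_j)+c_2\sum_{j\in\mathcal{N}_i}h_i\big(K(x_i-x_j),t_i\big),\qquad x_i=s_i+r_i.$$ *)

theory Defs
  imports "HOL-Analysis.Analysis"
begin

text \<open>Simple undirected graph on a finite vertex type 'v (vertices = {1..N}, N = CARD('v)),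
given by a symmetric irreflexive adjacency relation E.\<close>

definition undirected_graph :: "('v \<Rightarrow> 'v \<Rightarrow> bool) \<Rightarrow> bool" where
  "undirected_graph E \<longleftrightarrow> (\<forall>i j. E i j \<longleftrightarrow> E j i) \<and> (\<forall>i. \<not> E i i)"

definition connected_graph :: "('v \<Rightarrow> 'v \<Rightarrow> bool) \<Rightarrow> bool" where
  "connected_graph E \<longleftrightarrow> (\<forall>i j. E\<^sup>*\<^sup>* i j)"

definition neighbors :: "('v \<Rightarrow> 'v \<Rightarrow> bool) \<Rightarrow> 'v \<Rightarrow> 'v set" where
  "neighbors E i = {j. E i j}"

definition laplacian :: "('v::finite \<Rightarrow> 'v \<Rightarrow> bool) \<Rightarrow> real^'v^'v" where
  "laplacian E = (\<chi> i j. (if i = j then real (card (neighbors E i)) else 0)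
                          - (if E i j then 1 else 0))"

definition real_eigenvalue :: "real^'n^'n \<Rightarrow> real \<Rightarrow> bool" where
  "real_eigenvalue M \<mu> \<longleftrightarrow> (\<exists>v. v \<noteq> 0 \<and> M *v v = \<mu> *\<^sub>R v)"

definition lambda2 :: "('v::finite \<Rightarrow> 'v \<Rightarrow> bool) \<Rightarrow> real" where
  "lambda2 E = Min {\<mu>. real_eigenvalue (laplacian E) \<mu> \<and> \<mu> \<noteq> 0}"

definition complex_eigenvalue :: "real^'n^'n \<Rightarrow> complex \<Rightarrow> bool" where
  "complex_eigenvalue M \<mu> \<longleftrightarrow>
     (\<exists>v::complex^'n. v \<noteq> 0 \<and> (\<chi> i j. complex_of_real (M $ i $ j)) *v v = \<mu> *s v)"

definition hurwitz :: "real^'n^'n \<Rightarrow> bool" where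
  "hurwitz M \<longleftrightarrow> (\<forall>\<mu>. complex_eigenvalue M \<mu> \<longrightarrow> Re \<mu> < 0)"

definition stabilizable :: "real^'n^'n \<Rightarrow> real^'p^'n \<Rightarrow> bool" where
  "stabilizable A B \<longleftrightarrow> (\<exists>F :: real^'n^'p. hurwitz (A + B ** F))"

definition sym_pos_def :: "real^'n^'n \<Rightarrow> bool" where
  "sym_pos_def M \<longleftrightarrow> transpose M = M \<and> (\<forall>x. x \<noteq> 0 \<longrightarrow> x \<bullet> (M *v x) > 0)"

definition hbl :: "real \<Rightarrow> real \<Rightarrow> real^'p \<Rightarrow> real \<Rightarrow> real^'p" where
  "hbl \<epsilon> \<phi> \<omega> \<tau> = (1 / (norm \<omega> + \<epsilon> * exp (- \<phi> * \<tau>))) *\<^sub>R \<omega>"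

end

theory Submission
  imports Defs "HOL-Library.Transitive_Closure_Table" "HOL-Real_Asymp.Real_Asymp"
begin

lemma sum_nbrs_if:
  "(\<Sum>j\<in>neighbors E i. g j) = (\<Sum>j\<in>(UNIV::'v::finite set). if E i j then g j else 0)"
proof -
  have "neighbors E i = {j\<in>UNIV. E i j}" by (simp add: neighbors_def)
  thus ?thesis using sum.inter_filter[of "UNIV::'v set" g "E i"] by simp
qed

lemma swap_nbrs:
  fixes E :: "'v::finite \<Rightarrow> 'v \<Rightarrow> bool" and g :: "'v \<Rightarrow> 'v \<Rightarrow> 'a::comm_monoid_add"
  assumes "undirected_graph E"
  shows "(\<Sum>i\<in>UNIV. \<Sum>j\<in>neighbors E i. g i j) = (\<Sum>i\<in>UNIV. \<Sum>j\<in>neighbors E i. g j i)"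
proof -
  have "(\<Sum>i\<in>UNIV. \<Sum>j\<in>neighbors E i. g i j) = (\<Sum>i\<in>UNIV. \<Sum>j\<in>UNIV. if E i j then g i j else 0)"
    by (simp add: sum_nbrs_if)
  also have "\<dots> = (\<Sum>j\<in>UNIV. \<Sum>i\<in>UNIV. if E i j then g i j else 0)"
    by (rule sum.swap)
  also have "\<dots> = (\<Sum>j\<in>UNIV. \<Sum>i\<in>UNIV. if E j i then g i j else 0)"
  proof (rule sum.cong[OF refl], rule sum.cong[OF refl])
    fix i j have "E i j = E j i" using assms unfolding undirected_graph_def by blast
    then show "(if E i j then g i j else 0) = (if E j i then g i j else 0)" by (simp only:)
  qed
  also have "\<dots> = (\<Sum>i\<in>UNIV. \<Sum>j\<in>neighbors E i. g j i)"
    by (simp add: sum_nbrs_if)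
  finally show ?thesis .
qed

definition Bd :: "('v \<Rightarrow> 'v \<Rightarrow> bool) \<Rightarrow> ('v \<Rightarrow> 'a::real_normed_vector) \<Rightarrow> 'v set \<Rightarrow> real" where
  "Bd E y S = (\<Sum>i\<in>S. \<Sum>j\<in>S. if E i j then norm (y i - y j) else 0)"

lemma Bd_insert:
  assumes "finite S" "a \<notin> S" "c \<in> S" "E a c" "undirected_graph E"
  shows "Bd E y S + 2 * norm (y a - y c) \<le> Bd E y (insert a S)"
proof -
  define g where "g i j = (if E i j then norm (y i - y j) else 0)" for i j
  have ca: "E c a" using assms unfolding undirected_graph_def by blast
  have aa: "\<not> E a a" using assms unfolding undirected_graph_def by blast
  have gaa: "g a a = 0" using aa by (simp add: g_def)
  have F: "(\<Sum>j\<in>insert a S. g i j) = g i a + (\<Sum>j\<in>S. g i j)" for i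
    using assms(1,2) by (rule sum.insert)
  have "Bd E y (insert a S) = (\<Sum>i\<in>insert a S. \<Sum>j\<in>insert a S. g i j)"
    unfolding Bd_def g_def ..
  also have "\<dots> = (\<Sum>j\<in>insert a S. g a j) + (\<Sum>i\<in>S. \<Sum>j\<in>insert a S. g i j)"
    using assms(1,2) by (rule sum.insert)
  also have "\<dots> = (\<Sum>j\<in>S. g a j) + (\<Sum>i\<in>S. g i a) + (\<Sum>i\<in>S. \<Sum>j\<in>S. g i j)"
    unfolding F sum.distrib using gaa by (simp add: add.assoc)
  finally have eq: "Bd E y (insert a S) = (\<Sum>j\<in>S. g a j) + (\<Sum>i\<in>S. g i a) + Bd E y S"
    unfolding Bd_def g_def .
  have g0: "g i j \<ge> 0" for i j by (simp add: g_def)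
  have 1: "g c a \<le> (\<Sum>i\<in>S. g i a)"
    by (rule member_le_sum) (use assms g0 in auto)
  have 2: "g a c \<le> (\<Sum>j\<in>S. g a j)"
    by (rule member_le_sum) (use assms g0 in auto)
  have "g c a = norm (y a - y c)" "g a c = norm (y a - y c)"
    using ca assms(4) by (simp_all add: g_def norm_minus_commute)
  then show ?thesis using eq 1 2 by linarith
qed

lemma Bd_mono:
  fixes S :: "'v::finite set"
  shows "Bd E y S \<le> Bd E y UNIV"
proof -
  have "(\<Sum>i\<in>S. \<Sum>j\<in>S. if E i j then norm (y i - y j) else 0)
     \<le> (\<Sum>i\<in>S. \<Sum>j\<in>UNIV. if E i j then norm (y i - y j) else 0)"
    by (rule sum_mono, rule sum_mono2) auto
  also have "\<dots> \<le> (\<Sum>i\<in>UNIV. \<Sum>j\<in>UNIV. if E i j then norm (y i - y j) else 0)"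
    by (rule sum_mono2) (auto intro: sum_nonneg)
  finally show ?thesis unfolding Bd_def .
qed

lemma path_bound:
  assumes "rtrancl_path E a xs b" "distinct (a # xs)" "undirected_graph E"
  shows "2 * norm (y a - y b) \<le> Bd E y (set (a # xs))"
  using assms
proof (induction rule: rtrancl_path.induct)
  case (base x)
  then show ?case by (simp add: Bd_def)
next
  case (step x c ys z)
  have IH: "2 * norm (y c - y z) \<le> Bd E y (set (c # ys))" using step by simp
  have "Bd E y (set (c # ys)) + 2 * norm (y x - y c) \<le> Bd E y (insert x (set (c # ys)))"
    by (rule Bd_insert) (use step in auto)
  moreover have "norm (y x - y z) \<le> norm (y x - y c) + norm (y c - y z)"
    using norm_triangle_ineq[of "y x - y c" "y c - y z"] by simp
  ultimately show ?case using IH by (simp only: list.set(2))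
qed

lemma conn_bound:
  fixes E :: "'v::finite \<Rightarrow> 'v \<Rightarrow> bool"
  assumes "undirected_graph E" "connected_graph E"
  shows "2 * norm (y a - y b) \<le> (\<Sum>i\<in>UNIV. \<Sum>j\<in>neighbors E i. norm (y i - y j))"
proof -
  have "E\<^sup>*\<^sup>* a b" using assms unfolding connected_graph_def by blast
  then obtain xs where "rtrancl_path E a xs b" by (auto simp: rtranclp_eq_rtrancl_path)
  then obtain xs' where p: "rtrancl_path E a xs' b" "distinct (a # xs')"
    by (rule rtrancl_path_distinct)
  have "2 * norm (y a - y b) \<le> Bd E y (set (a # xs'))" by (rule path_bound[OF p assms(1)])
  also have "\<dots> \<le> Bd E y UNIV" by (rule Bd_mono)
  also have "\<dots> = (\<Sum>i\<in>UNIV. \<Sum>j\<in>neighbors E i. norm (y i - y j))"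
    by (simp add: Bd_def sum_nbrs_if)
  finally show ?thesis .
qed

lemma sum_norm_bound:
  fixes E :: "'v::finite \<Rightarrow> 'v \<Rightarrow> bool" and y :: "'v \<Rightarrow> 'a::real_normed_vector"
  assumes "undirected_graph E" "connected_graph E" "(\<Sum>i\<in>UNIV. y i) = 0"
  shows "2 * (\<Sum>i\<in>UNIV. norm (y i)) \<le> (real CARD('v) - 1) * (\<Sum>i\<in>UNIV. \<Sum>j\<in>neighbors E i. norm (y i - y j))"
proof -
  define T where "T = (\<Sum>i\<in>UNIV. \<Sum>j\<in>neighbors E i. norm (y i - y j))"
  define N where "N = real CARD('v)"
  have Npos: "N > 0" unfolding N_def by simp
  have each: "N * (2 * norm (y i)) \<le> (N - 1) * T" for i
  proof -
    have "(\<Sum>k\<in>UNIV. y i - y k) = N *\<^sub>R y i"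
      using assms(3) by (simp add: sum_subtractf N_def sum_constant_scaleR)
    hence "N * norm (y i) = norm (\<Sum>k\<in>UNIV. y i - y k)" using Npos by (simp add: abs_of_pos)
    also have "\<dots> \<le> (\<Sum>k\<in>UNIV. norm (y i - y k))" by (rule norm_sum)
    also have "\<dots> = (\<Sum>k\<in>UNIV - {i}. norm (y i - y k))"
      using sum.remove[of UNIV i "\<lambda>k. norm (y i - y k)"] by simp
    also have "\<dots> \<le> (\<Sum>k\<in>UNIV - {i}. T / 2)"
    proof (intro sum_mono)
      fix k show "norm (y i - y k) \<le> T / 2"
        using conn_bound[OF assms(1,2), of y i k] unfolding T_def by linarith
    qed
    also have "\<dots> = (N - 1) * T / 2"
    proof -
      have "card (UNIV - {i}) = CARD('v) - 1" by (simp add: card_Diff_singleton)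
      moreover have "CARD('v) \<ge> 1" by (simp add: Suc_leI)
      ultimately have "real (card (UNIV - {i})) = N - 1" unfolding N_def by (simp add: of_nat_diff)
      thus ?thesis by simp
    qed
    finally show ?thesis by (simp add: algebra_simps)
  qed
  have "N * (2 * (\<Sum>i\<in>UNIV. norm (y i))) = (\<Sum>i\<in>UNIV. N * (2 * norm (y i)))"
    by (simp add: sum_distrib_left)
  also have "\<dots> \<le> (\<Sum>i\<in>(UNIV::'v set). (N - 1) * T)" by (intro sum_mono each)
  also have "\<dots> = N * ((N - 1) * T)" by (simp add: N_def)
  finally have "N * (2 * (\<Sum>i\<in>UNIV. norm (y i))) \<le> N * ((N - 1) * T)" .
  then have "2 * (\<Sum>i\<in>UNIV. norm (y i)) \<le> (N - 1) * T"
    using Npos by (simp only: mult_le_cancel_left_pos)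
  then show ?thesis unfolding T_def N_def .
qed

lemma lap_mult:
  fixes E :: "'v::finite \<Rightarrow> 'v \<Rightarrow> bool"
  shows "(laplacian E *v z) $ i = (\<Sum>j\<in>neighbors E i. z$i - z$j)"
proof -
  have "(laplacian E *v z) $ i = (\<Sum>j\<in>UNIV. ((if i = j then real (card (neighbors E i)) else 0)
                          - (if E i j then 1 else 0)) * z$j)"
    by (simp add: matrix_vector_mult_def laplacian_def)
  also have "\<dots> = (\<Sum>j\<in>UNIV. (if i = j then real (card (neighbors E i)) * z$j else 0))
                 - (\<Sum>j\<in>UNIV. (if E i j then z$j else 0))"
    by (subst sum_subtractf[symmetric]) (intro sum.cong refl; simp add: left_diff_distrib)
  also have "\<dots> = real (card (neighbors E i)) * z$i - (\<Sum>j\<in>neighbors E i. z$j)"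
    by (simp add: sum_nbrs_if)
  also have "\<dots> = (\<Sum>j\<in>neighbors E i. z$i - z$j)"
    by (simp add: sum_subtractf)
  finally show ?thesis .
qed

lemma lap_transpose:
  fixes E :: "'v::finite \<Rightarrow> 'v \<Rightarrow> bool"
  assumes "undirected_graph E"
  shows "transpose (laplacian E) = laplacian E"
proof -
  have s: "E i j = E j i" for i j using assms unfolding undirected_graph_def by blast
  show ?thesis
    unfolding transpose_def laplacian_def
    by (simp add: vec_eq_iff s)
qed

lemma inner_mat: "(a::real^'n) \<bullet> (M *v b) = (transpose M *v a) \<bullet> b"
  by (simp add: dot_lmul_matrix[symmetric])

lemma lap_inner_sym:
  fixes E :: "'v::finite \<Rightarrow> 'v \<Rightarrow> bool"
  assumes "undirected_graph E"
  shows "a \<bullet> (laplacian E *v b) = b \<bullet> (laplacian E *v a)"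
  using inner_mat[of a "laplacian E" b] lap_transpose[OF assms] by (simp add: inner_commute)

lemma lap_inner:
  fixes E :: "'v::finite \<Rightarrow> 'v \<Rightarrow> bool"
  shows "a \<bullet> (laplacian E *v b) = (\<Sum>i\<in>UNIV. \<Sum>j\<in>neighbors E i. a$i * (b$i - b$j))"
  by (simp add: inner_vec_def lap_mult sum_distrib_left)

lemma lap_quad:
  fixes E :: "'v::finite \<Rightarrow> 'v \<Rightarrow> bool"
  assumes "undirected_graph E"
  shows "2 * (z \<bullet> (laplacian E *v z)) = (\<Sum>i\<in>UNIV. \<Sum>j\<in>neighbors E i. (z$i - z$j)^2)"
proof -
  have a: "z \<bullet> (laplacian E *v z) = (\<Sum>i\<in>UNIV. \<Sum>j\<in>neighbors E i. z$i * (z$i - z$j))"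
    by (rule lap_inner)
  have b: "(\<Sum>i\<in>UNIV. \<Sum>j\<in>neighbors E i. z$i * (z$i - z$j))
         = (\<Sum>i\<in>UNIV. \<Sum>j\<in>neighbors E i. z$j * (z$j - z$i))"
    by (rule swap_nbrs[OF assms])
  have "(\<Sum>i\<in>UNIV. \<Sum>j\<in>neighbors E i. (z$i - z$j)^2)
      = (\<Sum>i\<in>UNIV. \<Sum>j\<in>neighbors E i. z$i * (z$i - z$j) + z$j * (z$j - z$i))"
    by (intro sum.cong refl) (simp add: power2_eq_square algebra_simps)
  also have "\<dots> = (\<Sum>i\<in>UNIV. \<Sum>j\<in>neighbors E i. z$i * (z$i - z$j))
                 + (\<Sum>i\<in>UNIV. \<Sum>j\<in>neighbors E i. z$j * (z$j - z$i))"
    by (simp add: sum.distrib)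
  finally show ?thesis using a b by linarith
qed

lemma lap_quad_nonneg:
  fixes E :: "'v::finite \<Rightarrow> 'v \<Rightarrow> bool"
  assumes "undirected_graph E"
  shows "0 \<le> z \<bullet> (laplacian E *v z)"
proof -
  have "0 \<le> (\<Sum>i\<in>UNIV. \<Sum>j\<in>neighbors E i. (z$i - z$j)^2)"
    by (intro sum_nonneg) simp
  thus ?thesis using lap_quad[OF assms, of z] by linarith
qed

lemma lap_sum:
  fixes E :: "'v::finite \<Rightarrow> 'v \<Rightarrow> bool"
  assumes "undirected_graph E"
  shows "(\<Sum>i\<in>UNIV. (laplacian E *v v) $ i) = 0"
proof -
  have "(\<Sum>i\<in>UNIV. \<Sum>j\<in>neighbors E i. v$i - v$j) = (\<Sum>i\<in>UNIV. \<Sum>j\<in>neighbors E i. v$j - v$i)"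
    by (rule swap_nbrs[OF assms])
  also have "\<dots> = - (\<Sum>i\<in>UNIV. \<Sum>j\<in>neighbors E i. v$i - v$j)"
    by (simp add: sum_negf[symmetric])
  finally show ?thesis by (simp add: lap_mult)
qed

lemma conn_const:
  fixes E :: "'v::finite \<Rightarrow> 'v \<Rightarrow> bool" and z :: "'v \<Rightarrow> 'a"
  assumes "connected_graph E" "\<And>i j. E i j \<Longrightarrow> z i = z j"
  shows "z a = z b"
proof -
  have "E\<^sup>*\<^sup>* a b" using assms unfolding connected_graph_def by blast
  then show ?thesis
  proof (induction rule: rtranclp_induct)
    case base then show ?case by simp
  next
    case (step y w) then show ?case using assms(2)[of y w] by simp
  qed
qed

lemma quad_pos:
  fixes E :: "'v::finite \<Rightarrow> 'v \<Rightarrow> bool"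
  assumes G: "undirected_graph E" "connected_graph E"
    and z0: "z \<noteq> 0" and zs: "(\<Sum>i\<in>UNIV. z$i) = 0"
  shows "0 < z \<bullet> (laplacian E *v z)"
proof (rule ccontr)
  assume "\<not> 0 < z \<bullet> (laplacian E *v z)"
  hence "z \<bullet> (laplacian E *v z) = 0" using lap_quad_nonneg[OF G(1), of z] by linarith
  hence S0: "(\<Sum>i\<in>UNIV. \<Sum>j\<in>neighbors E i. (z$i - z$j)^2) = 0" using lap_quad[OF G(1), of z] by simp
  have eq: "z$i = z$j" if "E i j" for i j
  proof -
    have "(\<Sum>j\<in>neighbors E i. (z$i - z$j)^2) = 0"
      using S0 by (subst (asm) sum_nonneg_eq_0_iff) (auto intro: sum_nonneg)
    hence "(z$i - z$j)^2 = 0"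
      by (subst (asm) sum_nonneg_eq_0_iff) (use that in \<open>auto simp: neighbors_def\<close>)
    thus ?thesis by simp
  qed
  obtain a :: 'v where True by blast
  have c: "z$i = z$a" for i by (rule conn_const[OF G(2), of "\<lambda>i. z$i"]) (use eq in auto)
  have "(\<Sum>i\<in>UNIV. z$i) = (\<Sum>i\<in>(UNIV::'v set). z$a)" by (rule sum.cong[OF refl c])
  also have "\<dots> = real CARD('v) * z$a" by simp
  finally have "z$a = 0" using zs by simp
  hence "\<forall>i. z$i = 0" using c by metis
  hence "z = 0" by (simp add: vec_eq_iff)
  thus False using z0 by simp
qed

lemma quadratic_zero:
  fixes a b :: real
  assumes "\<And>th. 0 \<le> 2 * th * a + th^2 * b"
  shows "a = 0"
proof -
  define c where "c = \<bar>b\<bar> + 1"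
  have cpos: "c > 0" unfolding c_def by simp
  define th where "th = - a / c"
  have 1: "th^2 * b \<le> th^2 * c" unfolding c_def by (intro mult_left_mono) auto
  have 2: "th^2 * c = a^2 / c" unfolding th_def using cpos by (simp add: power2_eq_square field_simps)
  have 3: "2 * th * a = - 2 * (a^2 / c)" unfolding th_def by (simp add: power2_eq_square)
  have "0 \<le> - (a^2 / c)" using assms[of th] 1 2 3 by linarith
  hence "a^2 / c \<le> 0" by linarith
  hence "a^2 \<le> 0" using cpos by (simp add: divide_le_0_iff)
  thus ?thesis by simp
qed

lemma quad_scale: "(c *\<^sub>R v) \<bullet> (M *v (c *\<^sub>R v)) = c^2 * (v \<bullet> (M *v v))" for M :: "real^'n^'n"
  by (simp add: matrix_vector_mult_scaleR power2_eq_square)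

lemma eig_finite:
  fixes E :: "'v::finite \<Rightarrow> 'v \<Rightarrow> bool"
  assumes G: "undirected_graph E"
  shows "finite {\<mu>. real_eigenvalue (laplacian E) \<mu> \<and> \<mu> \<noteq> 0}"
proof -
  define L where "L = laplacian E"
  define S where "S = {\<mu>. real_eigenvalue L \<mu> \<and> \<mu> \<noteq> 0}"
  define ev where "ev \<mu> = (SOME v. v \<noteq> 0 \<and> L *v v = \<mu> *\<^sub>R v)" for \<mu>
  have evp: "ev \<mu> \<noteq> 0 \<and> L *v ev \<mu> = \<mu> *\<^sub>R ev \<mu>" if "\<mu> \<in> S" for \<mu>
  proof -
    have "\<exists>v. v \<noteq> 0 \<and> L *v v = \<mu> *\<^sub>R v" using that unfolding S_def real_eigenvalue_def by simp
    from someI_ex[OF this] show ?thesis unfolding ev_def .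
  qed
  have inj: "inj_on ev S"
  proof (rule inj_onI)
    fix a b assume ab: "a \<in> S" "b \<in> S" "ev a = ev b"
    have 1: "L *v ev a = a *\<^sub>R ev a" using evp[OF ab(1)] by (rule conjunct2)
    have 2: "L *v ev b = b *\<^sub>R ev b" using evp[OF ab(2)] by (rule conjunct2)
    have "a *\<^sub>R ev a = L *v ev a" by (rule 1[symmetric])
    also have "\<dots> = b *\<^sub>R ev a" unfolding ab(3) by (rule 2)
    finally have "a *\<^sub>R ev a = b *\<^sub>R ev a" .
    hence "(a - b) *\<^sub>R ev a = 0" by (simp add: scaleR_diff_left)
    thus "a = b" using evp[OF ab(1)] by simp
  qed
  have orth: "pairwise orthogonal (ev ` S)"
  proof (clarsimp simp: pairwise_def)
    fix a b assume ab: "a \<in> S" "b \<in> S" "ev a \<noteq> ev b"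
    have "a \<noteq> b" using ab by auto
    have "a * (ev a \<bullet> ev b) = (L *v ev a) \<bullet> ev b" using evp[OF ab(1)] by simp
    also have "\<dots> = ev b \<bullet> (L *v ev a)" by (simp add: inner_commute)
    also have "\<dots> = ev a \<bullet> (L *v ev b)" unfolding L_def by (rule lap_inner_sym[OF G])
    also have "\<dots> = b * (ev a \<bullet> ev b)" using evp[OF ab(2)] by simp
    finally have "(a - b) * (ev a \<bullet> ev b) = 0" by (simp add: left_diff_distrib)
    thus "orthogonal (ev a) (ev b)" using \<open>a \<noteq> b\<close> by (simp add: orthogonal_def)
  qed
  have "0 \<notin> ev ` S" using evp by auto
  hence "independent (ev ` S)" using orth pairwise_orthogonal_independent by blast
  hence "finite (ev ` S)" by (rule finiteI_independent)
  hence "finite S" using inj by (rule finite_imageD)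
  thus ?thesis unfolding S_def L_def .
qed

lemma spectral:
  fixes E :: "'v::finite \<Rightarrow> 'v \<Rightarrow> bool"
  assumes G: "undirected_graph E" "connected_graph E" and N2: "CARD('v) \<ge> 2"
  shows "0 < lambda2 E \<and> (\<forall>z. (\<Sum>i\<in>UNIV. z$i) = 0 \<longrightarrow> lambda2 E * (z \<bullet> z) \<le> z \<bullet> (laplacian E *v z))"
proof -
  define L where "L = laplacian E"
  define q where "q z = z \<bullet> (L *v z)" for z
  define Z where "Z = {z::real^'v. (\<Sum>i\<in>UNIV. z$i) = 0}"
  define U where "U = Z \<inter> sphere 0 1"
  have closedZ: "closed Z" unfolding Z_def
    by (intro closed_Collect_eq continuous_intros)
  have compU: "compact U" unfolding U_def using closedZ by (intro closed_Int_compact) auto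
  obtain a b :: 'v where ab: "a \<noteq> b"
  proof -
    have "\<not> (\<forall>a b::'v. a = b)"
    proof
      assume "\<forall>a b::'v. a = b"
      hence "(UNIV::'v set) \<subseteq> {undefined}" by auto
      hence "CARD('v) \<le> 1" using card_mono[of "{undefined}" "UNIV::'v set"] by simp
      thus False using N2 by simp
    qed
    thus ?thesis using that by blast
  qed
  define e :: "real^'v" where "e = (\<chi> i. (if i = a then 1 else 0) - (if i = b then 1 else 0))"
  have eZ: "e \<in> Z" unfolding Z_def e_def by (simp add: sum_subtractf)
  have e0: "e \<noteq> 0"
  proof
    assume "e = 0" hence "e $ a = 0" by simp
    thus False using ab unfolding e_def by simp
  qed
  have scale_Z: "c *\<^sub>R z \<in> Z" if "z \<in> Z" for z c
    using that unfolding Z_def by (simp add: scaleR_sum_right[symmetric] sum_distrib_left[symmetric])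
  have "(1 / norm e) *\<^sub>R e \<in> U" unfolding U_def using e0 eZ scale_Z by simp
  hence Une: "U \<noteq> {}" by blast
  have contq: "continuous_on U q" unfolding q_def
    by (intro continuous_intros linear_continuous_on matrix_vector_mul_bounded_linear)
  obtain zs where zsU: "zs \<in> U" and zmin: "\<And>y. y \<in> U \<Longrightarrow> q zs \<le> q y"
    using continuous_attains_inf[OF compU Une contq] by blast
  define \<mu> where "\<mu> = q zs"
  have zsZ: "zs \<in> Z" and zsn: "norm zs = 1" using zsU unfolding U_def by auto
  have zz: "zs \<bullet> zs = 1" using zsn by (simp add: dot_square_norm)
  have gen: "\<mu> * (v \<bullet> v) \<le> q v" if "v \<in> Z" for v
  proof (cases "v = 0")
    case True then show ?thesis by (simp add: q_def)
  next
    case False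
    define w where "w = (1 / norm v) *\<^sub>R v"
    have "w \<in> U" unfolding U_def w_def using False that scale_Z by simp
    hence "\<mu> \<le> q w" unfolding \<mu>_def by (rule zmin)
    also have "q w = (1 / norm v)^2 * q v" unfolding q_def w_def by (rule quad_scale)
    finally have "\<mu> * (norm v)^2 \<le> q v" using False by (simp add: field_simps)
    thus ?thesis by (simp add: power2_norm_eq_inner)
  qed
  define g where "g = L *v zs - \<mu> *\<^sub>R zs"
  have gZ: "g \<in> Z" using zsZ lap_sum[OF G(1), of zs] unfolding Z_def g_def L_def
    by (simp add: sum_subtractf scaleR_sum_right[symmetric] sum_distrib_left[symmetric])
  have gz1: "g \<bullet> zs = (L *v zs) \<bullet> zs - \<mu> * (zs \<bullet> zs)" unfolding g_def by (simp add: inner_diff_left)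
  have gz2: "(L *v zs) \<bullet> zs = \<mu>" unfolding \<mu>_def q_def by (rule inner_commute)
  have gz: "g \<bullet> zs = 0" using gz1 gz2 zz by simp
  define a0 where "a0 = g \<bullet> (L *v zs)"
  have "0 \<le> 2 * th * a0 + th^2 * (q g - \<mu> * (g \<bullet> g))" for th
  proof -
    define v where "v = zs + th *\<^sub>R g"
    have vZ: "v \<in> Z" using zsZ gZ unfolding Z_def v_def by (simp add: sum.distrib sum_distrib_left[symmetric])
    have sy: "zs \<bullet> (L *v g) = g \<bullet> (L *v zs)" unfolding L_def by (rule lap_inner_sym[OF G(1)])
    have qv: "q v = q zs + 2 * th * a0 + th^2 * q g"
      unfolding q_def v_def a0_def using sy
      by (simp add: matrix_vector_right_distrib matrix_vector_mult_scaleR inner_add_left inner_add_right power2_eq_square algebra_simps)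
    have vv: "v \<bullet> v = 1 + th^2 * (g \<bullet> g)"
      unfolding v_def using zz gz by (simp add: inner_add_left inner_add_right inner_commute power2_eq_square)
    have "\<mu> * (v \<bullet> v) \<le> q v" by (rule gen[OF vZ])
    thus ?thesis unfolding qv vv \<mu>_def by (simp add: algebra_simps)
  qed
  hence a00: "a0 = 0" by (rule quadratic_zero)
  have "g \<bullet> g = a0 - \<mu> * (g \<bullet> zs)" unfolding a0_def by (simp add: g_def inner_diff_right)
  hence "g \<bullet> g = 0" using a00 gz by simp
  hence "g = 0" by simp
  hence eig: "L *v zs = \<mu> *\<^sub>R zs" unfolding g_def by simp
  have zs0: "zs \<noteq> 0" using zsn by auto
  have mupos: "\<mu> > 0" unfolding \<mu>_def q_def L_def
    using quad_pos[OF G zs0] zsZ unfolding Z_def by simp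
  define S where "S = {\<mu>. real_eigenvalue (laplacian E) \<mu> \<and> \<mu> \<noteq> 0}"
  have muS: "\<mu> \<in> S" unfolding S_def real_eigenvalue_def using eig zs0 mupos unfolding L_def by auto
  have finS: "finite S" unfolding S_def by (rule eig_finite[OF G(1)])
  have l2: "lambda2 E = Min S" unfolding lambda2_def S_def ..
  have "lambda2 E \<le> \<mu>" unfolding l2 using finS muS by simp
  have "Min S \<in> S" using finS muS by (intro Min_in) auto
  then obtain v where v: "v \<noteq> 0" "laplacian E *v v = Min S *\<^sub>R v" "Min S \<noteq> 0"
    unfolding S_def real_eigenvalue_def by blast
  have "0 \<le> v \<bullet> (laplacian E *v v)" by (rule lap_quad_nonneg[OF G(1)])
  hence "0 \<le> Min S * (v \<bullet> v)" using v by simp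
  moreover have "v \<bullet> v > 0" using v by simp
  ultimately have "Min S \<ge> 0" by (simp add: zero_le_mult_iff)
  hence lpos: "lambda2 E > 0" using v l2 by simp
  have "lambda2 E * (z \<bullet> z) \<le> z \<bullet> (laplacian E *v z)" if "(\<Sum>i\<in>UNIV. z$i) = 0" for z
  proof -
    have "lambda2 E * (z \<bullet> z) \<le> \<mu> * (z \<bullet> z)"
      using \<open>lambda2 E \<le> \<mu>\<close> by (intro mult_right_mono) auto
    also have "\<dots> \<le> q z" using gen[of z] that unfolding Z_def by simp
    finally show ?thesis unfolding q_def L_def .
  qed
  thus ?thesis using lpos by blast
qed

lemma qf_lower:
  fixes M :: "real^'n::finite^'n"
  assumes "sym_pos_def M"
  shows "\<exists>a>0. \<forall>x. a * (x \<bullet> x) \<le> x \<bullet> (M *v x)"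
proof -
  define f where "f x = x \<bullet> (M *v x)" for x :: "real^'n"
  have pos: "x \<noteq> 0 \<Longrightarrow> f x > 0" for x using assms unfolding sym_pos_def_def f_def by blast
  obtain i :: 'n where True by blast
  have "axis i 1 \<in> sphere (0::real^'n) 1" by simp
  hence ne: "sphere (0::real^'n) 1 \<noteq> {}" by blast
  have cont: "continuous_on (sphere 0 1) f" unfolding f_def
    by (intro continuous_intros linear_continuous_on matrix_vector_mul_bounded_linear)
  obtain x0 where x0: "x0 \<in> sphere 0 1" and min: "\<And>y. y \<in> sphere 0 1 \<Longrightarrow> f x0 \<le> f y"
    using continuous_attains_inf[OF compact_sphere ne cont] by blast
  have "x0 \<noteq> 0" using x0 by auto
  hence apos: "f x0 > 0" by (rule pos)
  have "f x0 * (x \<bullet> x) \<le> f x" for x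
  proof (cases "x = 0")
    case True then show ?thesis by (simp add: f_def)
  next
    case False
    define w where "w = (1 / norm x) *\<^sub>R x"
    have "w \<in> sphere 0 1" unfolding w_def using False by simp
    hence "f x0 \<le> f w" by (rule min)
    also have "f w = (1 / norm x)^2 * f x" unfolding f_def w_def by (rule quad_scale)
    finally have "f x0 * (norm x)^2 \<le> f x" using False by (simp add: field_simps)
    thus ?thesis by (simp add: power2_norm_eq_inner)
  qed
  thus ?thesis using apos unfolding f_def by blast
qed

lemma qf_upper:
  fixes M :: "real^'n::finite^'n"
  shows "\<exists>b>0. \<forall>x. x \<bullet> (M *v x) \<le> b * (x \<bullet> x)"
proof -
  obtain K where K: "\<And>x. norm (M *v x) \<le> norm x * K"
    using bounded_linear.bounded[OF matrix_vector_mul_bounded_linear[of M]] by blast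
  define b where "b = max K 1"
  have "x \<bullet> (M *v x) \<le> b * (x \<bullet> x)" for x
  proof -
    have "x \<bullet> (M *v x) \<le> norm x * norm (M *v x)" by (rule norm_cauchy_schwarz)
    also have "\<dots> \<le> norm x * (norm x * b)"
      using K[of x] unfolding b_def by (intro mult_left_mono) (auto intro: order_trans[OF _ mult_left_mono])
    also have "\<dots> = b * (x \<bullet> x)" by (simp add: power2_norm_eq_inner[symmetric] power2_eq_square)
    finally show ?thesis .
  qed
  moreover have "b > 0" unfolding b_def by simp
  ultimately show ?thesis by blast
qed

lemma nonincr:
  fixes W W' :: "real \<Rightarrow> real"
  assumes d: "\<And>t. t \<ge> t0 \<Longrightarrow> (W has_real_derivative W' t) (at t within {t0..})"
    and n: "\<And>t. t \<ge> t0 \<Longrightarrow> W' t \<le> 0" and t: "t \<ge> t0"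
  shows "W t \<le> W t0"
proof -
  have "\<exists>x\<in>{t0..t}. W t - W t0 = (\<lambda>h. W' x * h) (t - t0)"
  proof (rule mvt_very_simple[OF t])
    fix x assume "t0 \<le> x" "x \<le> t"
    hence "(W has_real_derivative W' x) (at x within {t0..t})"
      using d[of x] by (rule_tac has_field_derivative_subset) auto
    thus "(W has_derivative (\<lambda>h. W' x * h)) (at x within {t0..t})"
      by (simp add: has_field_derivative_def)
  qed
  then obtain x where "x \<in> {t0..t}" "W t - W t0 = W' x * (t - t0)" by auto
  moreover have "W' x * (t - t0) \<le> 0" using n[of x] \<open>x \<in> {t0..t}\<close> t
    by (intro mult_nonpos_nonneg) auto
  ultimately show ?thesis by linarith
qed

lemma decay:
  fixes V V' :: "real \<Rightarrow> real"
  assumes d: "\<And>t. t \<ge> t0 \<Longrightarrow> (V has_real_derivative V' t) (at t within {t0..})"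
    and ineq: "\<And>t. t \<ge> t0 \<Longrightarrow> V' t \<le> - \<alpha> * V t + C * exp (- \<phi> * t)"
    and nn: "\<And>t. t \<ge> t0 \<Longrightarrow> 0 \<le> V t"
    and \<alpha>: "\<alpha> > 0" and \<phi>: "\<phi> > 0" and C: "C \<ge> 0"
  shows "(V \<longlongrightarrow> 0) at_top"
proof -
  define \<beta> where "\<beta> = min \<alpha> (\<phi> / 2)"
  have \<beta>pos: "\<beta> > 0" and \<beta>\<alpha>: "\<beta> \<le> \<alpha>" and \<beta>\<phi>: "\<phi> - \<beta> > 0" unfolding \<beta>_def using \<alpha> \<phi> by auto
  define D where "D = C / (\<phi> - \<beta>)"
  have Dnn: "D \<ge> 0" unfolding D_def using C \<beta>\<phi> by simp
  define W where "W t = exp (\<beta> * t) * V t + D * exp ((\<beta> - \<phi>) * t)" for t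
  define W' where "W' t = exp (\<beta> * t) * (\<beta> * V t + V' t) - C * exp ((\<beta> - \<phi>) * t)" for t
  have dW: "(W has_real_derivative W' t) (at t within {t0..})" if "t \<ge> t0" for t
  proof -
    have e1: "((\<lambda>t. exp (\<beta> * t)) has_real_derivative exp (\<beta> * t) * \<beta>) (at t within {t0..})"
      by (auto intro!: derivative_eq_intros)
    have e2: "((\<lambda>t. exp ((\<beta> - \<phi>) * t)) has_real_derivative exp ((\<beta> - \<phi>) * t) * (\<beta> - \<phi>)) (at t within {t0..})"
      by (auto intro!: derivative_eq_intros)
    have "(W has_real_derivative (exp (\<beta> * t) * V' t + exp (\<beta> * t) * \<beta> * V t)
            + D * (exp ((\<beta> - \<phi>) * t) * (\<beta> - \<phi>))) (at t within {t0..})"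
      unfolding W_def by (intro DERIV_add DERIV_mult' e1 d[OF that] DERIV_cmult e2)
    moreover have Dc: "D * (\<beta> - \<phi>) = - C" unfolding D_def using \<beta>\<phi> by (simp add: field_simps)
    moreover have "(exp (\<beta> * t) * V' t + exp (\<beta> * t) * \<beta> * V t)
            + D * (exp ((\<beta> - \<phi>) * t) * (\<beta> - \<phi>))
          = exp (\<beta> * t) * (\<beta> * V t + V' t) - C * exp ((\<beta> - \<phi>) * t)"
    proof -
      have "D * (exp ((\<beta> - \<phi>) * t) * (\<beta> - \<phi>)) = (D * (\<beta> - \<phi>)) * exp ((\<beta> - \<phi>) * t)"
        by (simp only: mult_ac)
      also have "\<dots> = - C * exp ((\<beta> - \<phi>) * t)" using Dc by simp
      finally show ?thesis by (simp add: algebra_simps)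
    qed
    ultimately show ?thesis unfolding W'_def by simp
  qed
  have nW: "W' t \<le> 0" if "t \<ge> t0" for t
  proof -
    have "\<beta> * V t + V' t \<le> C * exp (- \<phi> * t)"
      using ineq[OF that] nn[OF that] \<beta>\<alpha> mult_right_mono[OF \<beta>\<alpha> nn[OF that]] by linarith
    hence "exp (\<beta> * t) * (\<beta> * V t + V' t) \<le> exp (\<beta> * t) * (C * exp (- \<phi> * t))"
      by (intro mult_left_mono) auto
    also have "\<dots> = C * exp ((\<beta> - \<phi>) * t)" by (simp add: exp_add[symmetric] algebra_simps)
    finally show ?thesis unfolding W'_def by simp
  qed
  have bound: "V t \<le> W t0 * exp (- \<beta> * t)" if "t \<ge> t0" for t
  proof -
    have "W t \<le> W t0" by (rule nonincr[OF dW nW that])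
    moreover have "0 \<le> D * exp ((\<beta> - \<phi>) * t)" using Dnn by simp
    ultimately have "exp (\<beta> * t) * V t \<le> W t0" unfolding W_def by linarith
    hence A: "exp (- \<beta> * t) * (exp (\<beta> * t) * V t) \<le> exp (- \<beta> * t) * W t0"
      by (intro mult_left_mono) auto
    have B: "exp (- \<beta> * t) * (exp (\<beta> * t) * V t) = V t"
      by (simp add: mult.assoc[symmetric] exp_minus_inverse mult.commute[of "exp (- (\<beta> * t))"])
    show ?thesis using A unfolding B by (simp add: mult.commute)
  qed
  have lim: "((\<lambda>t. W t0 * exp (- \<beta> * t)) \<longlongrightarrow> 0) at_top"
    using \<beta>pos by real_asymp
  show ?thesis
  proof (rule tendsto_sandwich[OF _ _ tendsto_const lim])
    show "\<forall>\<^sub>F t in at_top. 0 \<le> V t" using nn by (auto simp: eventually_at_top_linorder)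
    show "\<forall>\<^sub>F t in at_top. V t \<le> W t0 * exp (- \<beta> * t)" using bound by (auto simp: eventually_at_top_linorder)
  qed
qed

lemma neg_mat_vec: "(- M) *v v = - (M *v v)" for M :: "real^'n^'m"
  by (simp add: matrix_vector_mult_def vec_eq_iff sum_negf)

lemma hbl_odd: "hbl e p (- w) tau = - hbl e p w tau"
  by (simp add: hbl_def)

lemma hbl_inner:
  assumes "e * exp (- p * tau) > 0"
  shows "w \<bullet> hbl e p w tau \<ge> norm w - e * exp (- p * tau)"
proof -
  define d where "d = e * exp (- p * tau)"
  have d: "d > 0" using assms unfolding d_def .
  have "w \<bullet> hbl e p w tau = (norm w)^2 / (norm w + d)"
    unfolding hbl_def d_def by (simp add: power2_norm_eq_inner)
  also have "\<dots> \<ge> norm w - d"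
  proof -
    have pos: "norm w + d > 0" using d by (simp add: add_nonneg_pos)
    have "(norm w - d) * (norm w + d) \<le> (norm w)^2"
      by (simp add: algebra_simps power2_eq_square)
    thus ?thesis using pos by (simp add: pos_le_divide_eq)
  qed
  finally show ?thesis unfolding d_def .
qed

lemma antisym_sum:
  fixes E :: "'v::finite \<Rightarrow> 'v \<Rightarrow> bool" and g :: "'v \<Rightarrow> 'v \<Rightarrow> 'a::real_vector"
  assumes "undirected_graph E" "\<And>i j. g j i = - g i j"
  shows "(\<Sum>i\<in>UNIV. \<Sum>j\<in>neighbors E i. g i j) = 0"
proof -
  define S where "S = (\<Sum>i\<in>UNIV. \<Sum>j\<in>neighbors E i. g i j)"
  have "S = (\<Sum>i\<in>UNIV. \<Sum>j\<in>neighbors E i. g j i)" unfolding S_def by (rule swap_nbrs[OF assms(1)])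
  also have "\<dots> = (\<Sum>i\<in>UNIV. \<Sum>j\<in>neighbors E i. - g i j)"
    by (rule sum.cong[OF refl], rule sum.cong[OF refl], rule assms(2))
  also have "\<dots> = - S" unfolding S_def by (simp add: sum_negf)
  finally have "S = - S" .
  hence "2 *\<^sub>R S = 0" by (simp add: scaleR_2 eq_neg_iff_add_eq_0)
  thus ?thesis unfolding S_def by simp
qed

lemma claimA:
  fixes E :: "'v::finite \<Rightarrow> 'v \<Rightarrow> bool" and y :: "'v \<Rightarrow> real^'p::finite"
  assumes G: "undirected_graph E" "connected_graph E" and N2: "CARD('v) \<ge> 2"
    and ys: "(\<Sum>i\<in>UNIV. y i) = 0"
  shows "lambda2 E * (\<Sum>i\<in>UNIV. y i \<bullet> y i) \<le> (\<Sum>i\<in>UNIV. \<Sum>j\<in>neighbors E i. y i \<bullet> (y i - y j))"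
proof -
  have sp: "\<forall>z. (\<Sum>i\<in>UNIV. z$i) = 0 \<longrightarrow> lambda2 E * (z \<bullet> z) \<le> z \<bullet> (laplacian E *v z)"
    using spectral[OF G N2] by blast
  define z where "z k = (\<chi> i. y i $ k)" for k
  have zs: "(\<Sum>i\<in>UNIV. z k $ i) = 0" for k
  proof -
    have "(\<Sum>i\<in>UNIV. z k $ i) = (\<Sum>i\<in>UNIV. y i) $ k" unfolding z_def by (simp add: sum_component)
    thus ?thesis using ys by simp
  qed
  have each: "lambda2 E * (z k \<bullet> z k) \<le> (\<Sum>i\<in>UNIV. \<Sum>j\<in>neighbors E i. y i $ k * (y i $ k - y j $ k))" for k
  proof -
    have "lambda2 E * (z k \<bullet> z k) \<le> z k \<bullet> (laplacian E *v z k)"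
      using sp zs[of k] by blast
    also have "\<dots> = (\<Sum>i\<in>UNIV. \<Sum>j\<in>neighbors E i. y i $ k * (y i $ k - y j $ k))"
      unfolding lap_inner by (simp add: z_def)
    finally show ?thesis .
  qed
  have "(\<Sum>i\<in>UNIV. y i \<bullet> y i) = (\<Sum>i\<in>UNIV. \<Sum>k\<in>UNIV. y i $ k * y i $ k)"
    by (simp add: inner_vec_def)
  also have "\<dots> = (\<Sum>k\<in>UNIV. \<Sum>i\<in>UNIV. y i $ k * y i $ k)" by (rule sum.swap)
  also have "\<dots> = (\<Sum>k\<in>UNIV. z k \<bullet> z k)" by (simp add: inner_vec_def z_def)
  finally have yy: "lambda2 E * (\<Sum>i\<in>UNIV. y i \<bullet> y i) = (\<Sum>k\<in>UNIV. lambda2 E * (z k \<bullet> z k))"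
    by (simp add: sum_distrib_left)
  have "(\<Sum>k\<in>UNIV. \<Sum>i\<in>UNIV. \<Sum>j\<in>neighbors E i. y i $ k * (y i $ k - y j $ k))
      = (\<Sum>i\<in>UNIV. \<Sum>k\<in>UNIV. \<Sum>j\<in>neighbors E i. y i $ k * (y i $ k - y j $ k))"
    by (rule sum.swap)
  also have "\<dots> = (\<Sum>i\<in>UNIV. \<Sum>j\<in>neighbors E i. \<Sum>k\<in>UNIV. y i $ k * (y i $ k - y j $ k))"
    by (rule sum.cong[OF refl], rule sum.swap)
  also have "\<dots> = (\<Sum>i\<in>UNIV. \<Sum>j\<in>neighbors E i. y i \<bullet> (y i - y j))"
    by (simp add: inner_vec_def)
  finally have rr: "(\<Sum>k\<in>UNIV. \<Sum>i\<in>UNIV. \<Sum>j\<in>neighbors E i. y i $ k * (y i $ k - y j $ k))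
      = (\<Sum>i\<in>UNIV. \<Sum>j\<in>neighbors E i. y i \<bullet> (y i - y j))" .
  have "(\<Sum>k\<in>UNIV. lambda2 E * (z k \<bullet> z k)) \<le> (\<Sum>k\<in>UNIV. \<Sum>i\<in>UNIV. \<Sum>j\<in>neighbors E i. y i $ k * (y i $ k - y j $ k))"
    by (intro sum_mono each)
  then show ?thesis using yy rr by simp
qed

lemma claimB:
  fixes E :: "'v::finite \<Rightarrow> 'v \<Rightarrow> bool" and y fv :: "'v \<Rightarrow> real^'p::finite"
  assumes G: "undirected_graph E" "connected_graph E"
    and ys: "(\<Sum>i\<in>UNIV. y i) = 0"
    and fb: "\<And>i. norm (fv i) \<le> f0" and f0: "f0 \<ge> 0"
    and c2: "c2 \<ge> f0 * (real CARD('v) - 1)"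
    and dpos: "e * exp (- p * tau) > 0"
  shows "2 * (\<Sum>i\<in>UNIV. y i \<bullet> fv i) - 2 * c2 * (\<Sum>i\<in>UNIV. \<Sum>j\<in>neighbors E i. y i \<bullet> hbl e p (y i - y j) tau)
         \<le> c2 * (e * exp (- p * tau)) * (\<Sum>i\<in>UNIV. real (card (neighbors E i)))"
proof -
  define d where "d = e * exp (- p * tau)"
  define h :: "real^'p \<Rightarrow> real^'p" where "h w = hbl e p w tau" for w
  define T where "T = (\<Sum>i\<in>UNIV. \<Sum>j\<in>neighbors E i. norm (y i - y j))"
  define Dn where "Dn = (\<Sum>i\<in>UNIV. real (card (neighbors E i)))"
  define Q2 where "Q2 = (\<Sum>i\<in>UNIV. \<Sum>j\<in>neighbors E i. y i \<bullet> h (y i - y j))"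
  have N1: "real CARD('v) \<ge> 1" by simp
  have c2nn: "c2 \<ge> 0" using c2 f0 N1 by (metis diff_ge_0_iff_ge mult_nonneg_nonneg order_trans)
  have Tnn: "T \<ge> 0" unfolding T_def by (intro sum_nonneg) auto
  have "Q2 = (\<Sum>i\<in>UNIV. \<Sum>j\<in>neighbors E i. y j \<bullet> h (y j - y i))"
    unfolding Q2_def by (rule swap_nbrs[OF G(1)])
  also have "\<dots> = (\<Sum>i\<in>UNIV. \<Sum>j\<in>neighbors E i. - (y j \<bullet> h (y i - y j)))"
  proof (rule sum.cong[OF refl], rule sum.cong[OF refl])
    fix i j
    have "y j - y i = - (y i - y j)" by simp
    hence "h (y j - y i) = - h (y i - y j)" unfolding h_def by (simp only: hbl_odd)
    thus "y j \<bullet> h (y j - y i) = - (y j \<bullet> h (y i - y j))" by simp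
  qed
  finally have Q2b: "Q2 = - (\<Sum>i\<in>UNIV. \<Sum>j\<in>neighbors E i. y j \<bullet> h (y i - y j))"
    by (simp add: sum_negf)
  have "2 * Q2 = (\<Sum>i\<in>UNIV. \<Sum>j\<in>neighbors E i. y i \<bullet> h (y i - y j))
              - (\<Sum>i\<in>UNIV. \<Sum>j\<in>neighbors E i. y j \<bullet> h (y i - y j))"
    using Q2b unfolding Q2_def by linarith
  also have "\<dots> = (\<Sum>i\<in>UNIV. \<Sum>j\<in>neighbors E i. (y i - y j) \<bullet> h (y i - y j))"
    by (simp add: sum_subtractf inner_diff_left)
  also have "\<dots> \<ge> (\<Sum>i\<in>UNIV. \<Sum>j\<in>neighbors E i. norm (y i - y j) - d)"
    unfolding h_def d_def by (intro sum_mono hbl_inner dpos)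
  finally have Q2ge: "2 * Q2 \<ge> T - d * Dn"
    unfolding T_def Dn_def by (simp add: sum_subtractf sum_distrib_left mult.commute)
  have "(\<Sum>i\<in>UNIV. y i \<bullet> fv i) \<le> (\<Sum>i\<in>UNIV. norm (y i) * f0)"
  proof (rule sum_mono)
    fix i
    have "y i \<bullet> fv i \<le> norm (y i) * norm (fv i)" by (rule norm_cauchy_schwarz)
    also have "\<dots> \<le> norm (y i) * f0" by (intro mult_left_mono fb) simp
    finally show "y i \<bullet> fv i \<le> norm (y i) * f0" .
  qed
  moreover have "(\<Sum>i\<in>UNIV. norm (y i) * f0) = f0 * (\<Sum>i\<in>UNIV. norm (y i))"
    by (simp add: sum_distrib_left mult.commute)
  ultimately have "2 * (\<Sum>i\<in>UNIV. y i \<bullet> fv i) \<le> f0 * (2 * (\<Sum>i\<in>UNIV. norm (y i)))"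
    by linarith
  also have "\<dots> \<le> f0 * ((real CARD('v) - 1) * T)"
    unfolding T_def by (intro mult_left_mono sum_norm_bound G ys f0)
  also have "\<dots> \<le> c2 * T" using c2 Tnn
    by (metis mult.assoc mult_right_mono)
  finally have fpart: "2 * (\<Sum>i\<in>UNIV. y i \<bullet> fv i) \<le> c2 * T" .
  have "c2 * (T - d * Dn) \<le> c2 * (2 * Q2)" using Q2ge c2nn by (rule mult_left_mono)
  hence "2 * (\<Sum>i\<in>UNIV. y i \<bullet> fv i) - 2 * c2 * Q2 \<le> c2 * d * Dn"
    using fpart by (simp add: algebra_simps)
  thus ?thesis unfolding Q2_def h_def d_def Dn_def .
qed

lemma mat_sum: "M *v (\<Sum>i\<in>S. v i) = (\<Sum>i\<in>S. M *v v i)" for M :: "real^'n^'m"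
  by (induct S rule: infinite_finite_induct) (auto simp: matrix_vector_right_distrib)

lemma PB_inner:
  fixes P :: "real^'n^'n" and B :: "real^'p^'n"
  shows "(P *v v) \<bullet> (B *v w) = ((transpose B ** P) *v v) \<bullet> w"
  by (simp add: inner_mat matrix_vector_mul_assoc)

lemma sym_inner:
  fixes P :: "real^'n^'n"
  assumes "transpose P = P"
  shows "v \<bullet> (P *v w) = (P *v v) \<bullet> w"
  using inner_mat[of v P w] assms by simp

lemma ric_vec:
  fixes P A Q :: "real^'n^'n" and B :: "real^'p^'n"
  assumes sP: "transpose P = P"
    and ric: "P ** A + transpose A ** P - P ** B ** transpose B ** P + Q = 0"
  shows "2 * ((P *v v) \<bullet> (A *v v)) = ((transpose B ** P) *v v) \<bullet> ((transpose B ** P) *v v) - v \<bullet> (Q *v v)"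
proof -
  define G where "G = transpose B ** P"
  have "0 = v \<bullet> ((P ** A + transpose A ** P - P ** B ** transpose B ** P + Q) *v v)"
    using ric by simp
  also have "\<dots> = v \<bullet> (P *v (A *v v)) + v \<bullet> (transpose A *v (P *v v))
      - v \<bullet> (P *v (B *v (transpose B *v (P *v v)))) + v \<bullet> (Q *v v)"
    by (simp add: matrix_vector_mult_add_rdistrib matrix_vector_mult_diff_rdistrib
        matrix_vector_mul_assoc inner_add_right inner_diff_right matrix_mul_assoc)
  also have "v \<bullet> (P *v (A *v v)) = (P *v v) \<bullet> (A *v v)" by (rule sym_inner[OF sP])
  also have "v \<bullet> (transpose A *v (P *v v)) = (P *v v) \<bullet> (A *v v)"
    using inner_mat[of v "transpose A" "P *v v"] by (simp add: inner_commute)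
  also have "v \<bullet> (P *v (B *v (transpose B *v (P *v v)))) = (G *v v) \<bullet> (G *v v)"
  proof -
    have z: "transpose B *v (P *v v) = G *v v" unfolding G_def by (rule matrix_vector_mul_assoc)
    have "v \<bullet> (P *v (B *v (transpose B *v (P *v v)))) = (P *v v) \<bullet> (B *v (transpose B *v (P *v v)))"
      by (rule sym_inner[OF sP])
    also have "\<dots> = (G *v v) \<bullet> (transpose B *v (P *v v))" unfolding G_def by (rule PB_inner)
    finally show ?thesis unfolding z .
  qed
  finally show ?thesis unfolding G_def by linarith
qed

theorem theorem1:
  fixes E :: "'v::finite \<Rightarrow> 'v \<Rightarrow> bool"
    and A Q P :: "real^'n::finite^'n"
    and B :: "real^'p::finite^'n"
    and K :: "real^'n^'p"
    and r s x :: "'v \<Rightarrow> real \<Rightarrow> real^'n"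
    and f :: "'v \<Rightarrow> real \<Rightarrow> real^'p"
    and u :: "'v \<Rightarrow> real \<Rightarrow> real^'p"
    and tloc :: "'v \<Rightarrow> real \<Rightarrow> real"
    and t0 f0 \<eta> \<epsilon> \<phi> c1 c2 :: real
  assumes G: "undirected_graph E" "connected_graph E"
    and S: "stabilizable A B"
    and f_cont: "\<And>i. continuous_on {t0..} (f i)"
    and f_bound: "\<And>i t. t \<ge> t0 \<Longrightarrow> norm (f i t) \<le> f0"
    and f0_pos: "f0 > 0"
    and r_ode: "\<And>i t. t \<ge> t0 \<Longrightarrow>
        (r i has_vector_derivative (A *v r i t + B *v f i t)) (at t within {t0..})"
    and clocks: "\<And>i t. t \<ge> t0 \<Longrightarrow> tloc i t = t + \<eta>"
    and eps_pos: "\<epsilon> > 0" and phi_pos: "\<phi> > 0"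
    and Q_spd: "sym_pos_def Q"
    and P_spd: "sym_pos_def P"
    and riccati: "P ** A + transpose A ** P - P ** B ** transpose B ** P + Q = 0"
    and K_def: "K = - (transpose B ** P)"
    and c1: "c1 \<ge> 1 / (2 * lambda2 E)"
    and c2: "c2 \<ge> f0 * (real CARD('v) - 1)"
    and x_def: "\<And>i t. x i t = s i t + r i t"
    and u_def: "\<And>i t. u i t =
        c1 *\<^sub>R (\<Sum>j\<in>neighbors E i. K *v (x i t - x j t))
      + c2 *\<^sub>R (\<Sum>j\<in>neighbors E i. hbl \<epsilon> \<phi> (K *v (x i t - x j t)) (tloc i t))"
    and s_ode: "\<And>i t. t \<ge> t0 \<Longrightarrow>
        (s i has_vector_derivative (A *v s i t + B *v u i t)) (at t within {t0..})"
    and s_init: "\<And>i. s i t0 = 0"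
  shows "\<forall>i. ((\<lambda>t. norm (x i t - (1 / real CARD('v)) *\<^sub>R (\<Sum>k\<in>UNIV. r k t))) \<longlongrightarrow> 0) at_top"
proof -
  define T where "T = {t0..}"
  define Nn where "Nn = real CARD('v)"
  have Npos: "Nn > 0" unfolding Nn_def by simp
  have dx: "(x i has_vector_derivative (A *v x i t + B *v (u i t + f i t))) (at t within T)"
    if "t \<ge> t0" for i t
  proof -
    have "((\<lambda>t. s i t + r i t) has_vector_derivative
            (A *v s i t + B *v u i t) + (A *v r i t + B *v f i t)) (at t within {t0..})"
      by (intro has_vector_derivative_add s_ode r_ode that)
    moreover have "(\<lambda>t. s i t + r i t) = x i" by (simp add: fun_eq_iff x_def)
    moreover have "(A *v s i t + B *v u i t) + (A *v r i t + B *v f i t) = A *v x i t + B *v (u i t + f i t)"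
      by (simp add: x_def matrix_vector_right_distrib)
    ultimately show ?thesis unfolding T_def by simp
  qed
  have usum: "(\<Sum>i\<in>UNIV. u i t) = 0" if "t \<ge> t0" for t
  proof -
    have S1: "(\<Sum>i\<in>UNIV. \<Sum>j\<in>neighbors E i. K *v (x i t - x j t)) = 0"
      by (rule antisym_sum[OF G(1)]) (simp add: matrix_vector_mult_diff_distrib)
    have S2': "(\<Sum>i\<in>UNIV. \<Sum>j\<in>neighbors E i. hbl \<epsilon> \<phi> (K *v (x i t - x j t)) (t + \<eta>)) = 0"
    proof (rule antisym_sum[OF G(1)])
      fix i j
      have "K *v (x j t - x i t) = - (K *v (x i t - x j t))" by (simp add: matrix_vector_mult_diff_distrib)
      thus "hbl \<epsilon> \<phi> (K *v (x j t - x i t)) (t + \<eta>) = - hbl \<epsilon> \<phi> (K *v (x i t - x j t)) (t + \<eta>)"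
        by (simp only: hbl_odd)
    qed
    have S2: "(\<Sum>i\<in>UNIV. \<Sum>j\<in>neighbors E i. hbl \<epsilon> \<phi> (K *v (x i t - x j t)) (tloc i t)) = 0"
      using S2' clocks[OF that] by simp
    have "(\<Sum>i\<in>UNIV. u i t) = c1 *\<^sub>R (\<Sum>i\<in>UNIV. \<Sum>j\<in>neighbors E i. K *v (x i t - x j t))
        + c2 *\<^sub>R (\<Sum>i\<in>UNIV. \<Sum>j\<in>neighbors E i. hbl \<epsilon> \<phi> (K *v (x i t - x j t)) (tloc i t))"
      unfolding u_def by (simp add: sum.distrib scaleR_sum_right)
    thus ?thesis using S1 S2 by simp
  qed
  define sb where "sb t = (\<Sum>k\<in>UNIV. s k t)" for t
  have dsb: "(sb has_vector_derivative A *v sb t) (at t within T)" if "t \<ge> t0" for t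
  proof -
    have "(sb has_vector_derivative (\<Sum>k\<in>UNIV. A *v s k t + B *v u k t)) (at t within T)"
      unfolding sb_def[abs_def] T_def by (intro has_vector_derivative_sum s_ode that)
    moreover have "(\<Sum>k\<in>UNIV. A *v s k t + B *v u k t) = A *v sb t"
      using usum[OF that] by (simp add: sum.distrib mat_sum[symmetric] sb_def)
    ultimately show ?thesis by simp
  qed
  obtain bA where bA: "bA > 0" "\<And>v. v \<bullet> (A *v v) \<le> bA * (v \<bullet> v)" using qf_upper[of A] by blast
  have sb0: "sb t = 0" if "t \<ge> t0" for t
  proof -
    define g where "g t = sb t \<bullet> sb t" for t
    define W where "W t = exp (- 2 * bA * t) * g t" for t
    define W' where "W' t = exp (- 2 * bA * t) * (- 2 * bA) * g t + exp (- 2 * bA * t) * (2 * (sb t \<bullet> (A *v sb t)))" for t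
    have dW: "(W has_real_derivative W' t) (at t within {t0..})" if "t \<ge> t0" for t
    proof -
      have "(g has_vector_derivative (sb t \<bullet> (A *v sb t) + (A *v sb t) \<bullet> sb t)) (at t within T)"
        unfolding g_def[abs_def]
        by (rule bounded_bilinear.has_vector_derivative[OF bounded_bilinear_inner dsb[OF that] dsb[OF that]])
      hence dg: "(g has_real_derivative 2 * (sb t \<bullet> (A *v sb t))) (at t within T)"
        by (simp add: has_real_derivative_iff_has_vector_derivative inner_commute)
      have de: "((\<lambda>t. exp (- 2 * bA * t)) has_real_derivative exp (- 2 * bA * t) * (- 2 * bA)) (at t within T)"
        by (auto intro!: derivative_eq_intros)
      have "(W has_real_derivative exp (- 2 * bA * t) * (2 * (sb t \<bullet> (A *v sb t))) + exp (- 2 * bA * t) * (- 2 * bA) * g t) (at t within T)"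
        unfolding W_def[abs_def] by (rule DERIV_mult'[OF de dg])
      thus ?thesis unfolding W'_def T_def by (simp add: add.commute)
    qed
    have nW: "W' t \<le> 0" if "t \<ge> t0" for t
    proof -
      have "2 * (sb t \<bullet> (A *v sb t)) \<le> 2 * bA * g t" using bA(2)[of "sb t"] unfolding g_def by simp
      hence "exp (- 2 * bA * t) * (2 * (sb t \<bullet> (A *v sb t))) \<le> exp (- 2 * bA * t) * (2 * bA * g t)"
        by (intro mult_left_mono) auto
      thus ?thesis unfolding W'_def by (simp add: algebra_simps)
    qed
    have "W t \<le> W t0" by (rule nonincr[OF dW nW that])
    also have "W t0 = 0" unfolding W_def g_def sb_def by (simp add: s_init)
    finally have "exp (- 2 * bA * t) * g t \<le> 0" unfolding W_def .
    hence "g t \<le> 0" by (simp add: mult_le_0_iff)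
    hence "sb t \<bullet> sb t = 0" unfolding g_def using inner_ge_zero[of "sb t"] by linarith
    thus ?thesis by simp
  qed
  have sumx: "(\<Sum>k\<in>UNIV. x k t) = (\<Sum>k\<in>UNIV. r k t)" if "t \<ge> t0" for t
    using sb0[OF that] unfolding sb_def by (simp add: x_def sum.distrib)
  define \<xi> where "\<xi> i t = x i t - (1 / Nn) *\<^sub>R (\<Sum>k\<in>UNIV. x k t)" for i t
  have goal_eq: "norm (x i t - (1 / real CARD('v)) *\<^sub>R (\<Sum>k\<in>UNIV. r k t)) = norm (\<xi> i t)"
    if "t \<ge> t0" for i t
    unfolding \<xi>_def Nn_def using sumx[OF that] by simp
  have main: "((\<lambda>t. norm (\<xi> i t)) \<longlongrightarrow> 0) at_top" for i
  proof (cases "CARD('v) \<ge> 2")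
    case False
    have "CARD('v) \<le> Suc 0" using False by simp
    hence all: "\<forall>a\<in>(UNIV::'v set). \<forall>b\<in>UNIV. a = b" by (simp add: card_le_Suc0_iff_eq)
    hence U: "(UNIV::'v set) = {i}" by blast
    have "\<xi> i t = 0" for t
    proof -
      have "card (UNIV::'v set) = card {i}" by (simp only: U)
      hence "CARD('v) = 1" by simp
      hence "Nn = 1" unfolding Nn_def by simp
      thus ?thesis unfolding \<xi>_def U by simp
    qed
    thus ?thesis by simp
  next
    case True
    note N2 = True
    have Lyap: "((\<lambda>t. norm (\<xi> i t)) \<longlongrightarrow> 0) at_top" for i
    proof -
      define F where "F t = (1 / Nn) *\<^sub>R (\<Sum>k\<in>UNIV. f k t)" for t
      define w where "w i t = u i t + f i t - F t" for i t
      have d\<xi>: "(\<xi> i has_vector_derivative (A *v \<xi> i t + B *v w i t)) (at t within T)"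
        if "t \<ge> t0" for i t
      proof -
        have d1: "((\<lambda>t. \<Sum>k\<in>UNIV. x k t) has_vector_derivative
                   (\<Sum>k\<in>UNIV. A *v x k t + B *v (u k t + f k t))) (at t within T)"
          by (intro has_vector_derivative_sum dx that)
        have d2: "((\<lambda>t. (1 / Nn) *\<^sub>R (\<Sum>k\<in>UNIV. x k t)) has_vector_derivative
                   (1 / Nn) *\<^sub>R (\<Sum>k\<in>UNIV. A *v x k t + B *v (u k t + f k t))) (at t within T)"
          by (rule bounded_linear.has_vector_derivative[OF bounded_linear_scaleR_right d1])
        have d3: "(\<xi> i has_vector_derivative (A *v x i t + B *v (u i t + f i t))
                   - (1 / Nn) *\<^sub>R (\<Sum>k\<in>UNIV. A *v x k t + B *v (u k t + f k t))) (at t within T)"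
          unfolding \<xi>_def[abs_def] by (rule has_vector_derivative_diff[OF dx[OF that] d2])
        have s1: "(\<Sum>k\<in>UNIV. A *v x k t + B *v (u k t + f k t))
                 = A *v (\<Sum>k\<in>UNIV. x k t) + B *v (\<Sum>k\<in>UNIV. u k t) + B *v (\<Sum>k\<in>UNIV. f k t)"
          by (simp add: sum.distrib mat_sum matrix_vector_right_distrib)
        have eq: "(A *v x i t + B *v (u i t + f i t))
                   - (1 / Nn) *\<^sub>R (\<Sum>k\<in>UNIV. A *v x k t + B *v (u k t + f k t))
                 = A *v \<xi> i t + B *v w i t"
          unfolding s1 usum[OF that] \<xi>_def w_def F_def
          by (simp add: matrix_vector_mult_diff_distrib matrix_vector_right_distrib
              matrix_vector_mult_scaleR algebra_simps)
        show ?thesis using d3 unfolding eq .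
      qed
      have \<xi>sum: "(\<Sum>i\<in>UNIV. \<xi> i t) = 0" for t
      proof -
        have "(\<Sum>i\<in>UNIV. \<xi> i t) = (\<Sum>k\<in>UNIV. x k t) - Nn *\<^sub>R ((1 / Nn) *\<^sub>R (\<Sum>k\<in>UNIV. x k t))"
          unfolding \<xi>_def sum_subtractf sum_constant_scaleR Nn_def ..
        also have "\<dots> = 0" using Npos by simp
        finally show ?thesis .
      qed
      define G where "G = transpose B ** P"
      define y where "y i t = G *v \<xi> i t" for i t
      have ysum: "(\<Sum>i\<in>UNIV. y i t) = 0" for t
        unfolding y_def mat_sum[symmetric] \<xi>sum by simp
      have sP: "transpose P = P" using P_spd unfolding sym_pos_def_def by blast
      define V where "V t = (\<Sum>i\<in>UNIV. \<xi> i t \<bullet> (P *v \<xi> i t))" for t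
      define V' where "V' t = (\<Sum>i\<in>UNIV. 2 * ((P *v \<xi> i t) \<bullet> (A *v \<xi> i t + B *v w i t)))" for t
      have dV: "(V has_real_derivative V' t) (at t within {t0..})" if "t \<ge> t0" for t
      proof -
        have "(V has_vector_derivative (\<Sum>i\<in>UNIV. \<xi> i t \<bullet> (P *v (A *v \<xi> i t + B *v w i t))
                + (A *v \<xi> i t + B *v w i t) \<bullet> (P *v \<xi> i t))) (at t within T)"
          unfolding V_def[abs_def]
        proof (rule has_vector_derivative_sum)
          fix i
          have dP: "((\<lambda>t. P *v \<xi> i t) has_vector_derivative P *v (A *v \<xi> i t + B *v w i t)) (at t within T)"
            by (rule bounded_linear.has_vector_derivative[OF matrix_vector_mul_bounded_linear d\<xi>[OF that]])
          show "((\<lambda>t. \<xi> i t \<bullet> (P *v \<xi> i t)) has_vector_derivative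
                  \<xi> i t \<bullet> (P *v (A *v \<xi> i t + B *v w i t)) + (A *v \<xi> i t + B *v w i t) \<bullet> (P *v \<xi> i t)) (at t within T)"
            by (rule bounded_bilinear.has_vector_derivative[OF bounded_bilinear_inner d\<xi>[OF that] dP])
        qed
        moreover have "(\<Sum>i\<in>UNIV. \<xi> i t \<bullet> (P *v (A *v \<xi> i t + B *v w i t))
                + (A *v \<xi> i t + B *v w i t) \<bullet> (P *v \<xi> i t)) = V' t"
          unfolding V'_def
        proof (rule sum.cong[OF refl])
          fix i
          have "\<xi> i t \<bullet> (P *v (A *v \<xi> i t + B *v w i t)) = (P *v \<xi> i t) \<bullet> (A *v \<xi> i t + B *v w i t)"
            by (rule sym_inner[OF sP])
          moreover have "(A *v \<xi> i t + B *v w i t) \<bullet> (P *v \<xi> i t) = (P *v \<xi> i t) \<bullet> (A *v \<xi> i t + B *v w i t)"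
            by (rule inner_commute)
          ultimately show "\<xi> i t \<bullet> (P *v (A *v \<xi> i t + B *v w i t))
                + (A *v \<xi> i t + B *v w i t) \<bullet> (P *v \<xi> i t) = 2 * ((P *v \<xi> i t) \<bullet> (A *v \<xi> i t + B *v w i t))"
            by simp
        qed
        ultimately show ?thesis unfolding T_def
          by (simp add: has_real_derivative_iff_has_vector_derivative)
      qed
      define Q1 where "Q1 t = (\<Sum>i\<in>UNIV. \<Sum>j\<in>neighbors E i. y i t \<bullet> (y i t - y j t))" for t
      define Q2 where "Q2 t = (\<Sum>i\<in>UNIV. \<Sum>j\<in>neighbors E i. y i t \<bullet> hbl \<epsilon> \<phi> (y i t - y j t) (t + \<eta>))" for t
      define Dn where "Dn = (\<Sum>i\<in>UNIV. real (card (neighbors E i)))"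
      have Kxy: "K *v (x i t - x j t) = - (y i t - y j t)" for i j t
      proof -
        have "x i t - x j t = \<xi> i t - \<xi> j t" unfolding \<xi>_def by simp
        hence "K *v (x i t - x j t) = - (G *v (\<xi> i t - \<xi> j t))"
          unfolding K_def G_def by (simp only: neg_mat_vec)
        thus ?thesis unfolding y_def by (simp add: matrix_vector_mult_diff_distrib)
      qed
      have yu: "(\<Sum>i\<in>UNIV. y i t \<bullet> u i t) = - c1 * Q1 t - c2 * Q2 t" if "t \<ge> t0" for t
      proof -
        have ui: "u i t = - (c1 *\<^sub>R (\<Sum>j\<in>neighbors E i. y i t - y j t))
                   - c2 *\<^sub>R (\<Sum>j\<in>neighbors E i. hbl \<epsilon> \<phi> (y i t - y j t) (t + \<eta>))" for i
          unfolding u_def Kxy clocks[OF that] hbl_odd by (simp add: sum_negf sum_subtractf algebra_simps)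
        have "y i t \<bullet> u i t = - c1 * (\<Sum>j\<in>neighbors E i. y i t \<bullet> (y i t - y j t))
                - c2 * (\<Sum>j\<in>neighbors E i. y i t \<bullet> hbl \<epsilon> \<phi> (y i t - y j t) (t + \<eta>))" for i
          unfolding ui by (simp add: inner_diff_right inner_sum_right)
        thus ?thesis unfolding Q1_def Q2_def
          by (simp add: sum_subtractf sum_distrib_left sum_negf)
      qed
      have l2: "0 < lambda2 E" using spectral[OF G N2] by blast
      have c1pos: "2 * c1 * lambda2 E \<ge> 1"
      proof -
        have "1 / (2 * lambda2 E) * (2 * lambda2 E) \<le> c1 * (2 * lambda2 E)"
          using c1 l2 by (intro mult_right_mono) auto
        thus ?thesis using l2 by simp
      qed
      have "1 / (2 * lambda2 E) > 0" using l2 by simp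
      hence c1nn: "c1 \<ge> 0" using c1 by linarith
      have dpos: "\<epsilon> * exp (- \<phi> * (t + \<eta>)) > 0" for t using eps_pos by simp
      have Vbound: "V' t \<le> - (\<Sum>i\<in>UNIV. \<xi> i t \<bullet> (Q *v \<xi> i t)) + c2 * (\<epsilon> * exp (- \<phi> * (t + \<eta>))) * Dn"
        if "t \<ge> t0" for t
      proof -
        have each: "2 * ((P *v \<xi> i t) \<bullet> (A *v \<xi> i t + B *v w i t))
             = y i t \<bullet> y i t - \<xi> i t \<bullet> (Q *v \<xi> i t) + 2 * (y i t \<bullet> w i t)" for i
        proof -
          have "(P *v \<xi> i t) \<bullet> (B *v w i t) = y i t \<bullet> w i t" unfolding y_def G_def by (rule PB_inner)
          moreover have "2 * ((P *v \<xi> i t) \<bullet> (A *v \<xi> i t)) = y i t \<bullet> y i t - \<xi> i t \<bullet> (Q *v \<xi> i t)"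
            unfolding y_def G_def by (rule ric_vec[OF sP riccati])
          ultimately show ?thesis by (simp add: inner_add_right algebra_simps)
        qed
        have yw: "(\<Sum>i\<in>UNIV. y i t \<bullet> w i t) = (\<Sum>i\<in>UNIV. y i t \<bullet> u i t) + (\<Sum>i\<in>UNIV. y i t \<bullet> f i t)"
        proof -
          have "(\<Sum>i\<in>UNIV. y i t \<bullet> w i t) = (\<Sum>i\<in>UNIV. y i t \<bullet> u i t) + (\<Sum>i\<in>UNIV. y i t \<bullet> f i t)
                 - (\<Sum>i\<in>UNIV. y i t) \<bullet> F t"
            unfolding w_def by (simp add: inner_add_right inner_diff_right sum.distrib sum_subtractf inner_sum_left)
          thus ?thesis unfolding ysum by simp
        qed
        have VV: "V' t = (\<Sum>i\<in>UNIV. y i t \<bullet> y i t) - (\<Sum>i\<in>UNIV. \<xi> i t \<bullet> (Q *v \<xi> i t))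
                 - 2 * c1 * Q1 t + (2 * (\<Sum>i\<in>UNIV. y i t \<bullet> f i t) - 2 * c2 * Q2 t)"
        proof -
          have "V' t = (\<Sum>i\<in>UNIV. y i t \<bullet> y i t) - (\<Sum>i\<in>UNIV. \<xi> i t \<bullet> (Q *v \<xi> i t))
                 + 2 * (\<Sum>i\<in>UNIV. y i t \<bullet> w i t)"
            unfolding V'_def each by (simp add: sum.distrib sum_subtractf sum_distrib_left)
          thus ?thesis unfolding yw yu[OF that] by (simp add: algebra_simps)
        qed
        have A1: "lambda2 E * (\<Sum>i\<in>UNIV. y i t \<bullet> y i t) \<le> Q1 t"
          unfolding Q1_def by (rule claimA[OF G N2 ysum])
        have yynn: "0 \<le> (\<Sum>i\<in>UNIV. y i t \<bullet> y i t)" by (intro sum_nonneg) simp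
        have "(\<Sum>i\<in>UNIV. y i t \<bullet> y i t) \<le> (2 * c1 * lambda2 E) * (\<Sum>i\<in>UNIV. y i t \<bullet> y i t)"
          using c1pos yynn by (metis mult_1 mult_right_mono)
        also have "\<dots> \<le> 2 * c1 * Q1 t"
          using mult_left_mono[OF A1, of "2 * c1"] c1nn by (simp add: mult.assoc)
        finally have A2: "(\<Sum>i\<in>UNIV. y i t \<bullet> y i t) \<le> 2 * c1 * Q1 t" .
        have B1: "2 * (\<Sum>i\<in>UNIV. y i t \<bullet> f i t) - 2 * c2 * Q2 t \<le> c2 * (\<epsilon> * exp (- \<phi> * (t + \<eta>))) * Dn"
          unfolding Q2_def Dn_def
          by (rule claimB[OF G ysum f_bound[OF that] _ c2 dpos]) (use f0_pos in simp)
        show ?thesis unfolding VV using A2 B1 by linarith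
      qed
      obtain qQ where qQ: "qQ > 0" "\<And>v. qQ * (v \<bullet> v) \<le> v \<bullet> (Q *v v)" using qf_lower[OF Q_spd] by blast
      obtain pl where pl: "pl > 0" "\<And>v. pl * (v \<bullet> v) \<le> v \<bullet> (P *v v)" using qf_lower[OF P_spd] by blast
      obtain pu where pu: "pu > 0" "\<And>v. v \<bullet> (P *v v) \<le> pu * (v \<bullet> v)" using qf_upper[of P] by blast
      define C where "C = c2 * \<epsilon> * exp (- \<phi> * \<eta>) * Dn"
      have "real CARD('v) - 1 \<ge> 0" by simp
      hence "f0 * (real CARD('v) - 1) \<ge> 0" using f0_pos by simp
      hence c2nn: "c2 \<ge> 0" using c2 by linarith
      have Cnn: "C \<ge> 0" unfolding C_def Dn_def using c2nn eps_pos by (intro mult_nonneg_nonneg sum_nonneg) auto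
      have ineq: "V' t \<le> - (qQ / pu) * V t + C * exp (- \<phi> * t)" if "t \<ge> t0" for t
      proof -
        define X where "X = (\<Sum>i\<in>UNIV. \<xi> i t \<bullet> \<xi> i t)"
        have "V t \<le> pu * X" unfolding V_def X_def sum_distrib_left by (intro sum_mono pu(2))
        hence "(qQ / pu) * V t \<le> (qQ / pu) * (pu * X)" using qQ pu by (intro mult_left_mono) auto
        also have "\<dots> = qQ * X" using pu by simp
        also have "\<dots> \<le> (\<Sum>i\<in>UNIV. \<xi> i t \<bullet> (Q *v \<xi> i t))" unfolding X_def sum_distrib_left by (intro sum_mono qQ(2))
        finally have 1: "(qQ / pu) * V t \<le> (\<Sum>i\<in>UNIV. \<xi> i t \<bullet> (Q *v \<xi> i t))" .
        have "exp (- \<phi> * (t + \<eta>)) = exp (- \<phi> * \<eta>) * exp (- \<phi> * t)"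
          by (simp add: exp_add[symmetric] algebra_simps)
        hence 2: "c2 * (\<epsilon> * exp (- \<phi> * (t + \<eta>))) * Dn = C * exp (- \<phi> * t)" unfolding C_def by simp
        show ?thesis using Vbound[OF that] 1 2 by linarith
      qed
      have Vnn: "0 \<le> V t" for t
        unfolding V_def by (intro sum_nonneg) (metis pl mult_nonneg_nonneg inner_ge_zero less_imp_le order_trans)
      have Vlim: "(V \<longlongrightarrow> 0) at_top"
        by (rule decay[OF dV ineq Vnn _ phi_pos Cnn]) (use qQ pu in auto)
      have bnd: "norm (\<xi> i t) \<le> sqrt (V t / pl)" for t
      proof -
        have "\<xi> i t \<bullet> \<xi> i t \<le> (\<Sum>k\<in>UNIV. \<xi> k t \<bullet> \<xi> k t)"
          by (rule member_le_sum) auto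
        also have "pl * \<dots> \<le> V t" unfolding V_def sum_distrib_left by (intro sum_mono pl(2))
        finally have "pl * (\<xi> i t \<bullet> \<xi> i t) \<le> V t" using pl by simp
        hence "\<xi> i t \<bullet> \<xi> i t \<le> V t / pl" using pl by (simp add: field_simps)
        hence "sqrt (\<xi> i t \<bullet> \<xi> i t) \<le> sqrt (V t / pl)" by (rule real_sqrt_le_mono)
        thus ?thesis by (simp add: norm_eq_sqrt_inner)
      qed
      have "((\<lambda>t. sqrt (V t / pl)) \<longlongrightarrow> sqrt (0 / pl)) at_top"
        by (intro tendsto_real_sqrt tendsto_divide Vlim tendsto_const) (use pl in simp)
      hence lim2: "((\<lambda>t. sqrt (V t / pl)) \<longlongrightarrow> 0) at_top" by simp
      show ?thesis
        by (rule tendsto_sandwich[OF _ _ tendsto_const lim2]) (use bnd in auto)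
    qed
    show ?thesis by (rule Lyap)
  qed
  show ?thesis
  proof
    fix i
    have ev: "\<forall>\<^sub>F t in at_top. norm (\<xi> i t) = norm (x i t - (1 / real CARD('v)) *\<^sub>R (\<Sum>k\<in>UNIV. r k t))"
      unfolding eventually_at_top_linorder by (rule exI[of _ t0]) (simp add: goal_eq)
    show "((\<lambda>t. norm (x i t - (1 / real CARD('v)) *\<^sub>R (\<Sum>k\<in>UNIV. r k t))) \<longlongrightarrow> 0) at_top"
      by (rule tendsto_cong[THEN iffD1, OF ev main])
  qed
qed

end
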